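(* Let $(\mathsf P,\mathcal O)$ be a semitopology. The following are equivalent: (1) every point $p\in\mathsf P$ is regular; (2) $\mathsf P$ partitions into topen sets: there is a set $\mathcal T$ of pairwise disjoint topen sets with $\bigcup\mathcal T=\mathsf P$; (3) every $X\subseteq\mathsf P$ has a cover by topen sets: there is a set $\mathcal T$ of topen sets with $X\subseteq\bigcup\mathcal T$.
   Context: A semitopology is a pair $(\mathsf P,\mathcal O)$ where $\mathsf P$ is a set and $\mathcal O\subseteq\mathcal P(\mathsf P)$ contains $\varnothing$ and $\mathsf P$ and is closed under arbitrary unions. Write $X\between Y$ when $X\cap Y\neq\varnothing$. A set $T$ is transitive when for all $O,O'\in\mathcal O$, $O\between T\between O'$ implies $O\between O'$; topen means nonempty, open and transitive. Points $p,p'$ are intertwined when every open set containing $p$ intersects every open set containing $p'$; $I(p)$ is the set of points intertwined with $p$; $K(p)=\mathrm{int}(I(p))$ (the union of all open subsets of $I(p)$) is the community of $p$. A point $p$ is regular when $p\in K(p)$ and $K(p)$ is topen. *)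

theory Defs
  imports Main
begin

definition semitopology :: "'a set \<Rightarrow> 'a set set \<Rightarrow> bool" where
  "semitopology P Opn \<longleftrightarrow> Opn \<subseteq> Pow P \<and> {} \<in> Opn \<and> P \<in> Opn \<and>
     (\<forall>S. S \<subseteq> Opn \<longrightarrow> \<Union>S \<in> Opn)"

definition between :: "'a set \<Rightarrow> 'a set \<Rightarrow> bool" where
  "between X Y \<longleftrightarrow> X \<inter> Y \<noteq> {}"

definition transitive_set :: "'a set set \<Rightarrow> 'a set \<Rightarrow> bool" where
  "transitive_set Opn T \<longleftrightarrow>
     (\<forall>A\<in>Opn. \<forall>B\<in>Opn. between A T \<and> between T B \<longrightarrow> between A B)"

definition topen :: "'a set set \<Rightarrow> 'a set \<Rightarrow> bool" where
  "topen Opn T \<longleftrightarrow> T \<noteq> {} \<and> T \<in> Opn \<and> transitive_set Opn T"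

definition intertwined :: "'a set set \<Rightarrow> 'a \<Rightarrow> 'a \<Rightarrow> bool" where
  "intertwined Opn p q \<longleftrightarrow>
     (\<forall>A\<in>Opn. \<forall>B\<in>Opn. p \<in> A \<and> q \<in> B \<longrightarrow> between A B)"

definition intertwined_set :: "'a set \<Rightarrow> 'a set set \<Rightarrow> 'a \<Rightarrow> 'a set" where
  "intertwined_set P Opn p = {q \<in> P. intertwined Opn p q}"

definition interior_st :: "'a set set \<Rightarrow> 'a set \<Rightarrow> 'a set" where
  "interior_st Opn X = \<Union>{A \<in> Opn. A \<subseteq> X}"

definition community :: "'a set \<Rightarrow> 'a set set \<Rightarrow> 'a \<Rightarrow> 'a set" where
  "community P Opn p = interior_st Opn (intertwined_set P Opn p)"

definition regular_point :: "'a set \<Rightarrow> 'a set set \<Rightarrow> 'a \<Rightarrow> bool" where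
  "regular_point P Opn p \<longleftrightarrow> p \<in> community P Opn p \<and> topen Opn (community P Opn p)"

end

theory Submission
  imports Defs
begin

lemma K_mem:
  assumes "x \<in> community P Opn p"
  shows "intertwined Opn p x \<and> x \<in> P"
  using assms unfolding community_def interior_st_def intertwined_set_def by blast

lemma K_open:
  assumes "semitopology P Opn"
  shows "community P Opn p \<in> Opn"
proof -
  have "{A \<in> Opn. A \<subseteq> intertwined_set P Opn p} \<subseteq> Opn" by auto
  thus ?thesis using assms unfolding semitopology_def community_def interior_st_def by blast
qed

lemma topen_sub_K:
  assumes st: "semitopology P Opn" and T: "topen Opn T" and x: "x \<in> T"
  shows "T \<subseteq> community P Opn x"
proof -
  have TO: "T \<in> Opn" and tr: "transitive_set Opn T" using T unfolding topen_def by auto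
  have TP: "T \<subseteq> P" using st TO unfolding semitopology_def by auto
  have "T \<subseteq> intertwined_set P Opn x"
  proof
    fix y assume y: "y \<in> T"
    have "intertwined Opn x y"
      unfolding intertwined_def
    proof (intro ballI impI)
      fix A B assume AB: "A \<in> Opn" "B \<in> Opn" "x \<in> A \<and> y \<in> B"
      have "between A T" "between T B" using AB x y unfolding between_def by auto
      thus "between A B" using tr AB unfolding transitive_set_def by blast
    qed
    thus "y \<in> intertwined_set P Opn x" using y TP unfolding intertwined_set_def by auto
  qed
  thus ?thesis using TO unfolding community_def interior_st_def by blast
qed

lemma topen_K:
  assumes st: "semitopology P Opn" and T: "topen Opn T" and p: "p \<in> T"
  shows "regular_point P Opn p"
proof -
  have pK: "p \<in> community P Opn p" using topen_sub_K[OF st T p] p by auto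
  have TO: "T \<in> Opn" and tr: "transitive_set Opn T" using T unfolding topen_def by auto
  have "transitive_set Opn (community P Opn p)"
    unfolding transitive_set_def
  proof (intro ballI impI)
    fix A B assume AB: "A \<in> Opn" "B \<in> Opn"
      "between A (community P Opn p) \<and> between (community P Opn p) B"
    then obtain a b where a: "a \<in> A" "a \<in> community P Opn p" and b: "b \<in> B" "b \<in> community P Opn p"
      unfolding between_def by auto
    have "intertwined Opn p a" "intertwined Opn p b" using K_mem[OF a(2)] K_mem[OF b(2)] by auto
    hence "between T A" "between T B" using a b p AB TO unfolding intertwined_def by auto
    hence "between A T" "between T B" unfolding between_def by auto
    thus "between A B" using tr AB unfolding transitive_set_def by blast
  qed
  thus ?thesis using pK K_open[OF st] unfolding regular_point_def topen_def by auto
qed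

lemma topen_union:
  assumes st: "semitopology P Opn" and T1: "topen Opn T1" and T2: "topen Opn T2"
    and i: "T1 \<inter> T2 \<noteq> {}"
  shows "topen Opn (T1 \<union> T2)"
proof -
  have O1: "T1 \<in> Opn" and tr1: "transitive_set Opn T1" and O2: "T2 \<in> Opn"
    and tr2: "transitive_set Opn T2" and ne: "T1 \<noteq> {}"
    using T1 T2 unfolding topen_def by auto
  have "{T1,T2} \<subseteq> Opn" using O1 O2 by auto
  hence "\<Union>{T1,T2} \<in> Opn" using st unfolding semitopology_def by blast
  hence O: "T1 \<union> T2 \<in> Opn" by simp
  have b12: "between T1 T2" "between T2 T1" using i unfolding between_def by auto
  have "transitive_set Opn (T1 \<union> T2)"
    unfolding transitive_set_def
  proof (intro ballI impI)
    fix A B assume AB: "A \<in> Opn" "B \<in> Opn" "between A (T1 \<union> T2) \<and> between (T1 \<union> T2) B"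
    have sym: "\<And>X Y. between X Y \<Longrightarrow> between Y X" unfolding between_def by auto
    have A: "between A T1 \<or> between A T2" and B: "between T1 B \<or> between T2 B"
      using AB(3) unfolding between_def by auto
    have t1: "\<And>X Y. X \<in> Opn \<Longrightarrow> Y \<in> Opn \<Longrightarrow> between X T1 \<Longrightarrow> between T1 Y \<Longrightarrow> between X Y"
      using tr1 unfolding transitive_set_def by blast
    have t2: "\<And>X Y. X \<in> Opn \<Longrightarrow> Y \<in> Opn \<Longrightarrow> between X T2 \<Longrightarrow> between T2 Y \<Longrightarrow> between X Y"
      using tr2 unfolding transitive_set_def by blast
    show "between A B"
      using A B
    proof (elim disjE)
      assume "between A T1" "between T1 B" thus ?thesis using t1 AB by blast
    next
      assume "between A T2" "between T2 B" thus ?thesis using t2 AB by blast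
    next
      assume a: "between A T1" and b: "between T2 B"
      have "between T1 B" using t2[OF O1 AB(2) b12(1) b] .
      thus ?thesis using t1 AB a by blast
    next
      assume a: "between A T2" and b: "between T1 B"
      have "between T2 B" using t1[OF O2 AB(2) b12(2) b] .
      thus ?thesis using t2 AB a by blast
    qed
  qed
  thus ?thesis using O ne unfolding topen_def by auto
qed

lemma one_two:
  assumes st: "semitopology P Opn" and r: "\<forall>p\<in>P. regular_point P Opn p"
  shows "\<exists>\<T>. (\<forall>T\<in>\<T>. topen Opn T) \<and>
               (\<forall>T1\<in>\<T>. \<forall>T2\<in>\<T>. T1 \<noteq> T2 \<longrightarrow> T1 \<inter> T2 = {}) \<and> \<Union>\<T> = P"
proof -
  let ?T = "community P Opn ` P"
  have h1: "\<forall>T\<in>?T. topen Opn T" using r unfolding regular_point_def by auto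
  have h3: "\<Union>?T = P"
  proof
    show "\<Union>?T \<subseteq> P"
    proof
      fix y assume "y \<in> \<Union>?T"
      then obtain p where "y \<in> community P Opn p" by auto
      thus "y \<in> P" using K_mem[of y P Opn p] by simp
    qed
    show "P \<subseteq> \<Union>?T"
    proof
      fix p assume "p \<in> P"
      hence "p \<in> community P Opn p" using r unfolding regular_point_def by auto
      thus "p \<in> \<Union>?T" using \<open>p \<in> P\<close> by (intro UnionI[of "community P Opn p"]) auto
    qed
  qed
  have key: "community P Opn p = community P Opn x" if p: "p \<in> P" and x: "x \<in> community P Opn p" for p x
  proof -
    have xP: "x \<in> P" using K_mem[OF x] by auto
    have tp: "topen Opn (community P Opn p)" and tx: "topen Opn (community P Opn x)"
      and xx: "x \<in> community P Opn x" and pp: "p \<in> community P Opn p"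
      using r p xP unfolding regular_point_def by auto
    have u: "topen Opn (community P Opn p \<union> community P Opn x)"
      using topen_union[OF st tp tx] x xx by auto
    have "community P Opn p \<union> community P Opn x \<subseteq> community P Opn p"
      using topen_sub_K[OF st u] pp by auto
    moreover have "community P Opn p \<union> community P Opn x \<subseteq> community P Opn x"
      using topen_sub_K[OF st u] xx by auto
    ultimately show ?thesis by auto
  qed
  have h2: "\<forall>T1\<in>?T. \<forall>T2\<in>?T. T1 \<noteq> T2 \<longrightarrow> T1 \<inter> T2 = {}"
  proof (intro ballI impI)
    fix T1 T2 assume "T1 \<in> ?T" "T2 \<in> ?T" "T1 \<noteq> T2"
    then obtain p q where "p \<in> P" "q \<in> P" "T1 = community P Opn p" "T2 = community P Opn q" by auto
    note pq = this
    show "T1 \<inter> T2 = {}"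
    proof (rule ccontr)
      assume "T1 \<inter> T2 \<noteq> {}"
      then obtain x where x1: "x \<in> community P Opn p" and x2: "x \<in> community P Opn q" using pq by auto
      have "community P Opn p = community P Opn x" "community P Opn q = community P Opn x"
        using key[OF pq(1) x1] key[OF pq(2) x2] by - 
      thus False using pq \<open>T1 \<noteq> T2\<close> by simp
    qed
  qed
  show ?thesis by (intro exI[of _ ?T] conjI h1 h2 h3)
qed

theorem corollary4p19:
  fixes P :: "'a set" and Opn :: "'a set set"
  assumes "semitopology P Opn"
  shows "((\<forall>p\<in>P. regular_point P Opn p) \<longleftrightarrow>
          (\<exists>\<T>. (\<forall>T\<in>\<T>. topen Opn T) \<and>
               (\<forall>T1\<in>\<T>. \<forall>T2\<in>\<T>. T1 \<noteq> T2 \<longrightarrow> T1 \<inter> T2 = {}) \<and> \<Union>\<T> = P))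
       \<and> ((\<forall>p\<in>P. regular_point P Opn p) \<longleftrightarrow>
          (\<forall>X. X \<subseteq> P \<longrightarrow> (\<exists>\<T>. (\<forall>T\<in>\<T>. topen Opn T) \<and> X \<subseteq> \<Union>\<T>)))"
proof -
  let ?R = "\<forall>p\<in>P. regular_point P Opn p"
  have c31: "?R" if h: "\<forall>X. X \<subseteq> P \<longrightarrow> (\<exists>\<T>. (\<forall>T\<in>\<T>. topen Opn T) \<and> X \<subseteq> \<Union>\<T>)"
  proof
    fix p assume p: "p \<in> P"
    obtain \<T> where "\<forall>T\<in>\<T>. topen Opn T" "P \<subseteq> \<Union>\<T>" using h by auto
    then obtain T where "topen Opn T" "p \<in> T" using p by blast
    thus "regular_point P Opn p" using topen_K[OF assms] by auto
  qed
  have c21: "?R" if h: "\<exists>\<T>. (\<forall>T\<in>\<T>. topen Opn T) \<and>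
               (\<forall>T1\<in>\<T>. \<forall>T2\<in>\<T>. T1 \<noteq> T2 \<longrightarrow> T1 \<inter> T2 = {}) \<and> \<Union>\<T> = P"
  proof
    fix p assume p: "p \<in> P"
    obtain \<T> where "\<forall>T\<in>\<T>. topen Opn T" "\<Union>\<T> = P" using h by auto
    then obtain T where "topen Opn T" "p \<in> T" using p by blast
    thus "regular_point P Opn p" using topen_K[OF assms] by auto
  qed
  have c13: "\<forall>X. X \<subseteq> P \<longrightarrow> (\<exists>\<T>. (\<forall>T\<in>\<T>. topen Opn T) \<and> X \<subseteq> \<Union>\<T>)"
    if r: ?R
  proof (intro allI impI)
    fix X assume X: "X \<subseteq> P"
    obtain \<T> where "\<forall>T\<in>\<T>. topen Opn T" "\<Union>\<T> = P" using one_two[OF assms r] by auto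
    thus "\<exists>\<T>. (\<forall>T\<in>\<T>. topen Opn T) \<and> X \<subseteq> \<Union>\<T>" using X by auto
  qed
  have A: "?R \<Longrightarrow> (\<exists>\<T>. (\<forall>T\<in>\<T>. topen Opn T) \<and>
               (\<forall>T1\<in>\<T>. \<forall>T2\<in>\<T>. T1 \<noteq> T2 \<longrightarrow> T1 \<inter> T2 = {}) \<and> \<Union>\<T> = P)"
    by (rule one_two[OF assms])
  show ?thesis
    apply (rule conjI)
     apply (rule iffI)
      apply (erule A)
     apply (erule c21)
    apply (rule iffI)
     apply (erule c13)
    apply (erule c31)
    done
qed

end
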